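(* Let $p\ge 2$ and let $\mathbf{x}_1,\dots,\mathbf{x}_p\in\mathbb{R}^n$ be vectors such that each has mean zero, $\bar{x}_i=\frac1n\sum_{k=1}^n x_{ki}=0$, and unit Euclidean length, $\|\mathbf{x}_i\|=1$, for $i=1,\dots,p$. Suppose $$|\mathrm{corr}(\mathbf{x}_i,\mathbf{x}_1)|>\frac{\sqrt{2}}{2}\qquad\text{for } i=2,3,\dots,p.$$ Then, among the $2^p$ sets of size $p$ formed by choosing exactly one element from $\{\mathbf{x}_j,-\mathbf{x}_j\}$ for each $j=1,2,\dots,p$, there exists a set in which every pair of (distinct) vectors has a positive correlation.
   Context: Here $\mathrm{corr}(\mathbf{u},\mathbf{v})$ denotes the sample (Pearson) correlation coefficient of two vectors $\mathbf{u},\mathbf{v}\in\mathbb{R}^n$; for vectors with mean zero and unit length it equals the inner product $\mathbf{u}\cdot\mathbf{v}$. *)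

theory Defs
  imports "HOL-Analysis.Analysis"
begin

definition sample_mean :: "real ^ 'n \<Rightarrow> real" where
  "sample_mean u = (\<Sum>k\<in>UNIV. u $ k) / real CARD('n)"

definition corr :: "real ^ 'n \<Rightarrow> real ^ 'n \<Rightarrow> real" where
  "corr u v =
     (\<Sum>k\<in>UNIV. (u $ k - sample_mean u) * (v $ k - sample_mean v)) /
     sqrt ((\<Sum>k\<in>UNIV. (u $ k - sample_mean u)^2) * (\<Sum>k\<in>UNIV. (v $ k - sample_mean v)^2))"

end

theory Submission
  imports Defs
begin

lemma sum_sq_inner: "(\<Sum>k\<in>UNIV. (u::real^'n) $ k ^ 2) = u \<bullet> u"
  by (simp add: inner_vec_def power2_eq_square)

lemma corr_unit:
  assumes "sample_mean (u::real^'n) = 0" "sample_mean v = 0" "norm u = 1" "norm v = 1"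
  shows "corr u v = u \<bullet> v"
proof -
  have "u \<bullet> u = 1" "v \<bullet> v = 1" using assms by (simp_all flip: power2_norm_eq_inner)
  then show ?thesis using assms
    by (simp add: corr_def sum_sq_inner inner_vec_def)
qed

lemma mean_scale: "sample_mean (s *\<^sub>R (u::real^'n)) = s * sample_mean u"
  by (simp add: sample_mean_def sum_distrib_left)

lemma key:
  fixes u v w :: "'a::real_inner"
  assumes "norm u = 1" "norm v = 1" "norm w = 1"
    and a: "u \<bullet> w > sqrt 2 / 2" and b: "v \<bullet> w > sqrt 2 / 2"
  shows "u \<bullet> v > 0"
proof -
  define a where "a = u \<bullet> w"
  define b where "b = v \<bullet> w"
  define u' where "u' = u - a *\<^sub>R w"
  define v' where "v' = v - b *\<^sub>R w"
  have uu: "u \<bullet> u = 1" "v \<bullet> v = 1" "w \<bullet> w = 1" using assms by (simp_all flip: power2_norm_eq_inner)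
  have r: "sqrt 2 / 2 * (sqrt 2 / 2) = (1/2::real)" by simp
  have r0: "0 \<le> sqrt 2 / (2::real)" by simp
  have a0: "a > sqrt 2 / 2" "b > sqrt 2 / 2" using a b a_def b_def by simp_all
  have a2: "a*a > 1/2" using mult_strict_mono[OF a0(1) a0(1)] r r0 a0 by linarith
  have b2: "b*b > 1/2" using mult_strict_mono[OF a0(2) a0(2)] r r0 a0 by linarith
  have ab: "a * b > 1/2" using mult_strict_mono[OF a0(1) a0(2)] r r0 a0 by linarith
  have nu: "u' \<bullet> u' = 1 - a^2" unfolding u'_def using uu a_def
    by (simp add: inner_diff_left inner_diff_right inner_commute power2_eq_square)
  have nv: "v' \<bullet> v' = 1 - b^2" unfolding v'_def using uu b_def
    by (simp add: inner_diff_left inner_diff_right inner_commute power2_eq_square)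
  have dec: "u \<bullet> v = a * b + u' \<bullet> v'" unfolding u'_def v'_def using uu a_def b_def
    by (simp add: inner_diff_left inner_diff_right inner_commute algebra_simps)
  have cs: "(u' \<bullet> v')^2 \<le> (u' \<bullet> u') * (v' \<bullet> v')"
  proof -
    have "\<bar>u' \<bullet> v'\<bar> \<le> norm u' * norm v'" by (rule Cauchy_Schwarz_ineq2)
    hence "\<bar>u' \<bullet> v'\<bar>^2 \<le> (norm u' * norm v')^2" by (intro power_mono) auto
    thus ?thesis by (simp add: power_mult_distrib power2_norm_eq_inner)
  qed
  have p1: "0 \<le> 1 - a^2" using nu by (metis inner_ge_zero)
  have p2: "0 \<le> 1 - b^2" using nv by (metis inner_ge_zero)
  have q1: "1 - a^2 < 1/2" using a2 by (simp add: power2_eq_square)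
  have q2: "1 - b^2 < 1/2" using b2 by (simp add: power2_eq_square)
  have "(1 - a^2) * (1 - b^2) \<le> (1 - a^2) * (1/2)" using p1 q2 by (intro mult_left_mono) auto
  also have "\<dots> < 1/4" using q1 by simp
  finally have "(u' \<bullet> v')^2 < 1/4" using cs nu nv by simp
  hence "\<bar>u' \<bullet> v'\<bar> < 1/2"
  proof -
    assume h: "(u' \<bullet> v')^2 < 1/4"
    show ?thesis
    proof (rule ccontr)
      assume "\<not> \<bar>u' \<bullet> v'\<bar> < 1/2"
      hence "1/2 \<le> \<bar>u' \<bullet> v'\<bar>" by simp
      hence "1/2 * (1/2) \<le> \<bar>u' \<bullet> v'\<bar> * \<bar>u' \<bullet> v'\<bar>" by (intro mult_mono) auto
      thus False using h by (simp add: power2_eq_square)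
    qed
  qed
  thus ?thesis using dec ab by linarith
qed

theorem theorem1:
  fixes p :: nat and x :: "nat \<Rightarrow> real ^ 'n"
  assumes "p \<ge> 2"
    and "\<And>i. i \<in> {1..p} \<Longrightarrow> sample_mean (x i) = 0"
    and "\<And>i. i \<in> {1..p} \<Longrightarrow> norm (x i) = 1"
    and "\<And>i. i \<in> {2..p} \<Longrightarrow> \<bar>corr (x i) (x 1)\<bar> > sqrt 2 / 2"
  shows "\<exists>s :: nat \<Rightarrow> real. (\<forall>j\<in>{1..p}. s j \<in> {1, -1}) \<and>
           (\<forall>i\<in>{1..p}. \<forall>j\<in>{1..p}. i \<noteq> j \<longrightarrow> corr (s i *\<^sub>R x i) (s j *\<^sub>R x j) > 0)"
proof -
  define s :: "nat \<Rightarrow> real" where "s i = (if x i \<bullet> x 1 \<ge> 0 then 1 else -1)" for i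
  have s1: "s j \<in> {1, -1}" for j by (simp add: s_def)
  have one: "1 \<in> {1..p}" using assms(1) by simp
  have mean: "sample_mean (s i *\<^sub>R x i) = 0" if "i \<in> {1..p}" for i
    using assms(2)[OF that] by (simp add: mean_scale)
  have nrm: "norm (s i *\<^sub>R x i) = 1" if "i \<in> {1..p}" for i
    using assms(3)[OF that] by (simp add: s_def)
  have sx: "(s i *\<^sub>R x i) \<bullet> x 1 = \<bar>x i \<bullet> x 1\<bar>" for i by (simp add: s_def)
  have big: "(s i *\<^sub>R x i) \<bullet> x 1 > sqrt 2 / 2" if "i \<in> {1..p}" for i
  proof (cases "i = 1")
    case True
    have "x 1 \<bullet> x 1 = 1" using assms(3)[OF one] by (simp flip: power2_norm_eq_inner)
    moreover have "sqrt 2 / 2 < (1::real)"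
    proof -
      have "sqrt 2 < sqrt (4::real)" by (simp only: real_sqrt_less_iff)
      also have "sqrt (4::real) = 2" using real_sqrt_abs[of 2] by simp
      finally show ?thesis by simp
    qed
    ultimately show ?thesis using True sx[of 1] by simp
  next
    case False
    hence "i \<in> {2..p}" using that by auto
    from assms(4)[OF this] show ?thesis
      using corr_unit[OF assms(2)[OF that] assms(2)[OF one] assms(3)[OF that] assms(3)[OF one]] sx
      by simp
  qed
  show ?thesis
  proof (intro exI[of _ s] conjI ballI impI)
    fix j assume "j \<in> {1..p}" then show "s j \<in> {1, -1}" using s1[of j] by simp
  next
    fix i j assume ij: "i \<in> {1..p}" "j \<in> {1..p}" "i \<noteq> j"
    have "(s i *\<^sub>R x i) \<bullet> (s j *\<^sub>R x j) > 0"
      by (rule key[OF nrm[OF ij(1)] nrm[OF ij(2)] assms(3)[OF one] big[OF ij(1)] big[OF ij(2)]])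
    thus "corr (s i *\<^sub>R x i) (s j *\<^sub>R x j) > 0"
      using corr_unit[OF mean[OF ij(1)] mean[OF ij(2)] nrm[OF ij(1)] nrm[OF ij(2)]] by simp
  qed
qed

end
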